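(* Let $\rho_{\tau_0}$ be a continuous probability density with positive min $\tau_0$ and let $(\rho_\tau)_{\tau\ge\tau_0}$ be the solution of $$\rho_\tau(x)=\rho_{\tau_0}(x)+\int_{\tau_0}^\tau\rho_s(s)\,\mathcal{Q}(\rho_s)(x-s)\,ds\quad (x>\tau),\qquad \rho_\tau(x)=0\quad(x<\tau).$$ Let $A(\tau)=\int_{\tau_0}^\tau Q_1\rho_s(s)\,ds$ for $\tau\ge\tau_0$. Then $$A(\tau)\le\frac{Q_1}{\log 2}\log\Big(\frac{2\tau}{\tau_0}\Big),\qquad \tau\ge\tau_0.$$ Consequently, for $t_0>0$ and the min history $\ell$ defined by $\log(t/t_0)=A(\ell(t))$ (with $\ell(t_0)=\tau_0$), one has $$\frac{\ell(t)}{\ell(t_0)}\ge\frac12\Big(\frac{t}{t_0}\Big)^{(\log2)/Q_1},\qquad t\ge t_0.$$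
   Context: Fix $p_k\ge0$ ($k\ge1$) with $\sum_kp_k=1$ and $Q_1=\sum_kkp_k<\infty$. For a density $\rho$, $\mathcal{Q}(\rho)=\sum_{k\ge1}p_k\rho^{\star k}$ with $\rho^{\star k}$ the $k$-fold self-convolution. The min of a probability density is the infimum of the support of its distribution. (For a continuous probability density with positive min, the displayed integral equation has a unique solution on $[\tau_0,\infty)$, each $\rho_\tau$ being a continuous probability density with min $\tau$.) The relation $\log(t/t_0)=A(\ell(t))$ defines $\ell(t)$ as (right-continuous) inverse of $\tau\mapsto t_0e^{A(\tau)}$. *)

theory Defs
  imports "HOL-Analysis.Analysis"
begin

definition conv :: "(real \<Rightarrow> real) \<Rightarrow> (real \<Rightarrow> real) \<Rightarrow> real \<Rightarrow> real" where
  "conv f g x = (\<integral>y. f y * g (x - y) \<partial>lborel)"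

(* k-fold self-convolution rho^{*k}, meaningful for k \<ge> 1 *)
fun selfconv :: "(real \<Rightarrow> real) \<Rightarrow> nat \<Rightarrow> real \<Rightarrow> real" where
  "selfconv \<rho> 0 = (\<lambda>_. 0)"
| "selfconv \<rho> (Suc 0) = \<rho>"
| "selfconv \<rho> (Suc (Suc n)) = conv \<rho> (selfconv \<rho> (Suc n))"

definition Qop :: "(nat \<Rightarrow> real) \<Rightarrow> (real \<Rightarrow> real) \<Rightarrow> real \<Rightarrow> real" where
  "Qop p \<rho> x = (\<Sum>k. p (Suc k) * selfconv \<rho> (Suc k) x)"

definition prob_density :: "(real \<Rightarrow> real) \<Rightarrow> bool" where
  "prob_density \<rho> \<longleftrightarrow> (\<forall>x. 0 \<le> \<rho> x) \<and> integrable lborel \<rho> \<and> integral\<^sup>L lborel \<rho> = 1"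

definition density_support :: "(real \<Rightarrow> real) \<Rightarrow> real set" where
  "density_support \<rho> = {x. \<forall>e>0. (LINT y:{x - e<..<x + e}|lborel. \<rho> y) > 0}"

definition density_min :: "(real \<Rightarrow> real) \<Rightarrow> real" where
  "density_min \<rho> = Inf (density_support \<rho>)"

(* continuous probability density with min tau: vanishes on (-inf,tau),
   continuous on [tau,inf) (so its value at tau is the right limit) *)
definition cont_density_min :: "(real \<Rightarrow> real) \<Rightarrow> real \<Rightarrow> bool" where
  "cont_density_min \<rho> \<tau> \<longleftrightarrow> prob_density \<rho> \<and> (\<forall>x<\<tau>. \<rho> x = 0)
     \<and> continuous_on {\<tau>..} \<rho> \<and> density_min \<rho> = \<tau>"

end

theory Submission
  imports Defs
begin

lemma selfconv_zero:
  assumes z: "\<And>x. x < s \<Longrightarrow> f x = 0" and s: "s > 0"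
  shows "\<forall>y<s. selfconv f (Suc n) y = 0"
proof (induction n)
  case 0
  then show ?case using z by simp
next
  case (Suc n)
  show ?case
  proof (intro allI impI)
    fix y assume y: "y < s"
    have "(\<lambda>z. f z * selfconv f (Suc n) (y - z)) = (\<lambda>_. 0)"
    proof
      fix w show "f w * selfconv f (Suc n) (y - w) = 0"
      proof (cases "w < s")
        case True then show ?thesis using z by simp
      next
        case False then have "y - w < s" using y s by linarith
        then show ?thesis using Suc by simp
      qed
    qed
    then show "selfconv f (Suc (Suc n)) y = 0" by (simp add: conv_def)
  qed
qed

lemma Qop_zero:
  assumes z: "\<And>x. x < s \<Longrightarrow> f x = 0" and s: "s > 0" and y: "y < s"
  shows "Qop p f y = 0"
  using selfconv_zero[OF z s] y by (simp add: Qop_def)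

theorem lemma4p2:
  fixes p :: "nat \<Rightarrow> real" and Q1 :: real
    and \<rho> :: "real \<Rightarrow> real \<Rightarrow> real" and \<tau>0 t0 :: real
    and A :: "real \<Rightarrow> real" and ell :: "real \<Rightarrow> ereal"
  assumes p_nonneg: "\<And>k. k \<ge> 1 \<Longrightarrow> p k \<ge> 0"
    and p_sum: "(\<lambda>k. p (Suc k)) sums 1"
    and Q1_fin: "summable (\<lambda>k. real (Suc k) * p (Suc k))"
    and Q1_def: "Q1 = (\<Sum>k. real (Suc k) * p (Suc k))"
    and tau0_pos: "\<tau>0 > 0"
    and init: "cont_density_min (\<rho> \<tau>0) \<tau>0"
    and sol_reg: "\<And>\<tau>. \<tau> \<ge> \<tau>0 \<Longrightarrow> cont_density_min (\<rho> \<tau>) \<tau>"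
    and sol_eq: "\<And>\<tau> x. \<tau> \<ge> \<tau>0 \<Longrightarrow> x > \<tau> \<Longrightarrow>
        ((\<lambda>s. \<rho> s s * Qop p (\<rho> s) (x - s)) has_integral (\<rho> \<tau> x - \<rho> \<tau>0 x)) {\<tau>0..\<tau>}"
    and sol_zero: "\<And>\<tau> x. \<tau> \<ge> \<tau>0 \<Longrightarrow> x < \<tau> \<Longrightarrow> \<rho> \<tau> x = 0"
    and A_int: "\<And>\<tau>. \<tau> \<ge> \<tau>0 \<Longrightarrow> (\<lambda>s. \<rho> s s) integrable_on {\<tau>0..\<tau>}"
    and A_def: "\<And>\<tau>. A \<tau> = integral {\<tau>0..\<tau>} (\<lambda>s. Q1 * \<rho> s s)"
    and t0_pos: "t0 > 0"
    and ell_def: "\<And>t. ell t = Inf (ereal ` {\<tau>. \<tau> \<ge> \<tau>0 \<and> t0 * exp (A \<tau>) > t})"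
  shows "(\<forall>\<tau>\<ge>\<tau>0. A \<tau> \<le> Q1 / ln 2 * ln (2 * \<tau> / \<tau>0))
       \<and> (\<forall>t\<ge>t0. ell t / ereal \<tau>0 \<ge> ereal (1/2 * (t / t0) powr (ln 2 / Q1)))"
proof -
  have F: "\<rho> \<tau> x = \<rho> a x" if a: "\<tau>0 \<le> a" "a \<le> \<tau>" "\<tau> < x" "x < 2*a" for a \<tau> x
  proof -
    define g where "g = (\<lambda>s. \<rho> s s * Qop p (\<rho> s) (x - s))"
    have h1: "(g has_integral (\<rho> \<tau> x - \<rho> \<tau>0 x)) {\<tau>0..\<tau>}"
      using sol_eq[of \<tau> x] a unfolding g_def by simp
    have h2: "(g has_integral (\<rho> a x - \<rho> \<tau>0 x)) {\<tau>0..a}"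
      using sol_eq[of a x] a unfolding g_def by simp
    have h3: "(g has_integral 0) {a..\<tau>}"
    proof -
      have "g s = 0" if s: "s \<in> {a..\<tau>}" for s
      proof -
        have "Qop p (\<rho> s) (x - s) = 0"
          by (rule Qop_zero[of s]) (use sol_zero[of s] s a tau0_pos in auto)
        then show ?thesis unfolding g_def by simp
      qed
      then show ?thesis using has_integral_0 has_integral_cong by (metis (mono_tags))
    qed
    have "(g has_integral (\<rho> a x - \<rho> \<tau>0 x + 0)) {\<tau>0..\<tau>}"
      by (rule has_integral_combine[OF a(1) a(2) h2 h3])
    then have "\<rho> \<tau> x - \<rho> \<tau>0 x = \<rho> a x - \<rho> \<tau>0 x" using has_integral_unique[OF h1] by simp
    then show ?thesis by simp
  qed
  have R: "\<rho> s s = \<rho> a s" if a: "\<tau>0 \<le> a" "a \<le> s" "s < 2*a" for a s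
  proof (cases "s = a")
    case True then show ?thesis by simp
  next
    case False
    with a have sa: "a < s" by simp
    have c1: "continuous_on {s..} (\<rho> s)" using sol_reg[of s] a unfolding cont_density_min_def by simp
    have "(\<rho> s \<longlongrightarrow> \<rho> s s) (at s within {s..})"
      using c1 by (simp add: continuous_on_def)
    then have l1: "(\<rho> s \<longlongrightarrow> \<rho> s s) (at_right s)"
      by (rule tendsto_within_subset) auto
    have c2: "continuous_on {a..} (\<rho> a)" using sol_reg[of a] a unfolding cont_density_min_def by simp
    have "isCont (\<rho> a) s"
      using continuous_on_interior[OF c2, of s] sa by simp
    then have l2: "(\<rho> a \<longlongrightarrow> \<rho> a s) (at_right s)"
      by (simp add: isCont_def filterlim_at_split)
    have ev: "eventually (\<lambda>x. \<rho> a x = \<rho> s x) (at_right s)"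
      unfolding eventually_at_right[OF a(3)]
      by (rule exI[of _ "2*a"]) (use a F[of a s] in auto)
    have "(\<rho> s \<longlongrightarrow> \<rho> a s) (at_right s)"
      using tendsto_cong[OF ev] l2 by simp
    then show ?thesis using tendsto_unique[OF trivial_limit_at_right_real l1] by simp
  qed
  have D: "integral {a..b} (\<lambda>s. \<rho> s s) \<le> 1" if a: "\<tau>0 \<le> a" "a \<le> b" "b \<le> 2*a" for a b
  proof -
    have "integral {a..b} (\<lambda>s. \<rho> s s) = integral {a..b} (\<rho> a)"
      by (rule integral_spike[of "{b}"]) (use R[of a] a in auto)
    also have "\<dots> \<le> integral UNIV (\<rho> a)"
    proof (rule integral_subset_le)
      have pd: "prob_density (\<rho> a)" using sol_reg[of a] a unfolding cont_density_min_def by simp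
      have "continuous_on {a..b} (\<rho> a)"
        using sol_reg[of a] a unfolding cont_density_min_def by (auto intro: continuous_on_subset)
      then show "\<rho> a integrable_on {a..b}" by (rule integrable_continuous_interval)
      show "\<rho> a integrable_on UNIV" using pd by (simp add: prob_density_def integrable_on_lborel)
      show "\<forall>x\<in>UNIV. 0 \<le> \<rho> a x" using pd by (simp add: prob_density_def)
    qed auto
    also have "\<dots> = 1"
    proof -
      have pd: "prob_density (\<rho> a)" using sol_reg[of a] a unfolding cont_density_min_def by simp
      then show ?thesis using has_integral_integral_lborel[of "\<rho> a"]
        by (simp add: prob_density_def integral_unique)
    qed
    finally show ?thesis .
  qed
  define I where "I = (\<lambda>\<tau>. integral {\<tau>0..\<tau>} (\<lambda>s. \<rho> s s))"
  have In: "\<forall>\<tau>. \<tau>0 \<le> \<tau> \<longrightarrow> \<tau> \<le> 2^n * \<tau>0 \<longrightarrow> I \<tau> \<le> log 2 (\<tau>/\<tau>0) + 1" for n :: nat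
  proof (induction n)
    case 0
    show ?case
    proof (intro allI impI)
      fix \<tau> assume "\<tau>0 \<le> \<tau>" "\<tau> \<le> 2^0 * \<tau>0"
      then have "\<tau> = \<tau>0" by simp
      then show "I \<tau> \<le> log 2 (\<tau>/\<tau>0) + 1" using tau0_pos by (simp add: I_def)
    qed
  next
    case (Suc n)
    show ?case
    proof (intro allI impI)
      fix \<tau> assume t: "\<tau>0 \<le> \<tau>" "\<tau> \<le> 2^Suc n * \<tau>0"
      have lg: "0 \<le> log 2 (\<tau>/\<tau>0)" using t tau0_pos by simp
      show "I \<tau> \<le> log 2 (\<tau>/\<tau>0) + 1"
      proof (cases "\<tau> \<le> 2*\<tau>0")
        case True
        then show ?thesis using D[of \<tau>0 \<tau>] t lg unfolding I_def by simp
      next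
        case False
        let ?a = "\<tau>/2"
        have ih: "I ?a \<le> log 2 (?a/\<tau>0) + 1"
          using Suc.IH[rule_format, of ?a] False t by (simp add: field_simps)
        have "integral {\<tau>0..?a} (\<lambda>s. \<rho> s s) + integral {?a..\<tau>} (\<lambda>s. \<rho> s s) = integral {\<tau>0..\<tau>} (\<lambda>s. \<rho> s s)"
          by (rule Henstock_Kurzweil_Integration.integral_combine) (use False t A_int[of \<tau>] tau0_pos in auto)
        then have "I \<tau> = I ?a + integral {?a..\<tau>} (\<lambda>s. \<rho> s s)"
          unfolding I_def by simp
        also have "\<dots> \<le> log 2 (?a/\<tau>0) + 1 + 1" using ih D[of ?a \<tau>] False t tau0_pos by simp
        also have "log 2 (?a/\<tau>0) = log 2 (\<tau>/\<tau>0) - 1"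
          proof -
            have e1: "?a/\<tau>0 = (\<tau>/\<tau>0)/2" by simp
            have e2: "log 2 ((\<tau>/\<tau>0)/2) = log 2 (\<tau>/\<tau>0) - log 2 2"
              by (rule log_divide_pos) (use tau0_pos t in auto)
            show ?thesis unfolding e1 e2 by simp
          qed
        finally show ?thesis by simp
      qed
    qed
  qed
  have Q1_nn: "Q1 \<ge> 0" unfolding Q1_def
    by (rule suminf_nonneg[OF Q1_fin]) (use p_nonneg in simp)
  have P1: "A \<tau> \<le> Q1 / ln 2 * ln (2 * \<tau> / \<tau>0)" if t: "\<tau> \<ge> \<tau>0" for \<tau>
  proof -
    obtain n :: nat where n: "\<tau>/\<tau>0 < 2^n" using real_arch_pow[of 2 "\<tau>/\<tau>0"] by auto
    then have "\<tau> \<le> 2^n * \<tau>0" using tau0_pos by (simp add: field_simps)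
    then have "I \<tau> \<le> log 2 (\<tau>/\<tau>0) + 1" using In t by blast
    moreover have "A \<tau> = Q1 * I \<tau>" unfolding A_def I_def by simp
    moreover have "log 2 (\<tau>/\<tau>0) + 1 = ln (2 * \<tau> / \<tau>0) / ln 2"
      using t tau0_pos by (simp add: log_def ln_mult ln_div field_simps)
    ultimately have "Q1 * I \<tau> \<le> Q1 * (ln (2 * \<tau> / \<tau>0) / ln 2)" "A \<tau> = Q1 * I \<tau>"
      using Q1_nn by (metis mult_left_mono)+
    moreover have "Q1 * (ln (2 * \<tau> / \<tau>0) / ln 2) = Q1 / ln 2 * ln (2 * \<tau> / \<tau>0)" by simp
    ultimately show ?thesis by linarith
  qed
  have P2: "ell t / ereal \<tau>0 \<ge> ereal (1/2 * (t / t0) powr (ln 2 / Q1))" if t: "t \<ge> t0" for t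
  proof -
    define c where "c = \<tau>0/2 * (t / t0) powr (ln 2 / Q1)"
    have Q1pos: "Q1 > 0"
    proof -
      have "(\<Sum>k. p (Suc k)) \<le> Q1" unfolding Q1_def
      proof (rule suminf_le)
        show "summable (\<lambda>k. p (Suc k))" using p_sum by (simp add: sums_iff)
        show "summable (\<lambda>k. real (Suc k) * p (Suc k))" by (rule Q1_fin)
        fix k
        have "0 \<le> p (Suc k)" using p_nonneg by simp
        then show "p (Suc k) \<le> real (Suc k) * p (Suc k)"
          using mult_right_mono[of 1 "real (Suc k)" "p (Suc k)"] by simp
      qed
      then show ?thesis using sums_unique[OF p_sum] by simp
    qed
    have "ereal c \<le> ell t" unfolding ell_def
    proof (rule Inf_greatest, clarify)
      fix \<tau> assume tau: "\<tau> \<ge> \<tau>0" "t0 * exp (A \<tau>) > t"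
      have tp: "t > 0" using t t0_pos by simp
      have "t/t0 < exp (A \<tau>)" using tau t0_pos by (simp add: divide_less_eq mult.commute)
      then have "ln (t/t0) < ln (exp (A \<tau>))" using tp t0_pos by (subst ln_less_cancel_iff) auto
      then have "ln (t/t0) < A \<tau>" by simp
      also have "\<dots> \<le> Q1 / ln 2 * ln (2 * \<tau> / \<tau>0)" using P1 tau by simp
      finally have "ln 2 / Q1 * ln (t/t0) < ln (2 * \<tau> / \<tau>0)"
        using Q1pos by (simp add: field_simps)
      then have "ln ((t / t0) powr (ln 2 / Q1)) < ln (2 * \<tau> / \<tau>0)"
        using tp t0_pos by (simp add: ln_powr)
      then have "(t / t0) powr (ln 2 / Q1) < 2 * \<tau> / \<tau>0"
        using tp t0_pos tau tau0_pos by (subst (asm) ln_less_cancel_iff) auto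
      then show "ereal c \<le> ereal \<tau>" unfolding c_def using tau0_pos by (simp add: field_simps)
    qed
    then show ?thesis
    proof (cases "ell t")
      case (real r)
      then have "c \<le> r" using \<open>ereal c \<le> ell t\<close> by simp
      then have "c/\<tau>0 \<le> r/\<tau>0" using tau0_pos by (simp add: divide_right_mono)
      then show ?thesis using real tau0_pos unfolding c_def by simp
    next
      case PInf then show ?thesis using tau0_pos by simp
    next
      case MInf then show ?thesis using \<open>ereal c \<le> ell t\<close> by simp
    qed
  qed
  show ?thesis using P1 P2 by blast
qed

end
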